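(* (i) There exists a doubly stochastic $2\times 2$ matrix $\mathcal N$ (for instance $\mathcal N=\frac19\begin{pmatrix}5&4\\4&5\end{pmatrix}$) such that for every $\kappa>\frac89$, no directed $3$-regular multigraph on $[2]$ has weak throughput at least $\kappa$ with respect to $\mathcal N$. (ii) For every positive integer $n$ there exists a doubly stochastic $n\times n$ matrix $\mathcal M_n$ such that no directed $(2n-1)$-regular multigraph on $[n]$ has weak direct throughput at least $\kappa$ with respect to $\mathcal M_n$, for every $\kappa>\frac{7n-4}{8n-4}$ if $n$ is even and for every $\kappa>\frac{7n-3}{8n-4}$ if $n$ is odd.
   Context: Let $n\ge 1$ and $[n]=\{1,\dots,n\}$. Networks are finite directed multigraphs on vertex set $[n]$; self-loops and parallel arcs are allowed. A directed multigraph is directed $r$-regular if every vertex has exactly $r$ outgoing and exactly $r$ incoming arcs (a self-loop at $v$ counts as one outgoing and one incoming arc of $v$). A path is a non-empty sequence of arcs $((u_1,v_1),\dots,(u_\ell,v_\ell))$ with $v_i=u_{i+1}$ for $i<\ell$; it goes from $u_1$ to $v_\ell$ and has length $\ell\ge 1$. An $n\times n$ matrix is doubly stochastic if all entries are nonnegative and every row and every column sums to $1$. In a directed $(2n-1)$-regular multigraph $G$ on $[n]$ every arc has capacity $\frac{1}{2n-1}$. $G$ hosts a nonnegative $n\times n$ matrix $\mathcal M=(a_{i,j})$ if there is a finite collection $\{(P_k,d_k)\}$, where each $P_k$ is a path in $G$ from some $s_k$ to some $t_k$ and $d_k\ge 0$, such that $\sum_{k:\,s_k=u,\,t_k=v}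 d_k=a_{u,v}$ for all $u,v\in[n]$, and for every arc $e$ of $G$ (parallel arcs are distinct) $\sum_{k:\,e\in P_k} d_k\le \frac{1}{2n-1}$. $G$ directly hosts $\mathcal M$ if this is possible with all paths $P_k$ of length $1$. For doubly stochastic $\mathcal M=(a_{i,j})$, the weak throughput (resp. weak direct throughput) of $G$ is the largest $\eta$ such that $G$ hosts (resp. directly hosts) some matrix $\mathcal M'=(a'_{i,j})$ with $0\le a'_{i,j}\le a_{i,j}$ for all $i,j$ and $\sum_{i,j}a'_{i,j}=\eta\sum_{i,j}a_{i,j}=\eta n$. *)

theory Defs
  imports Complex_Main
begin

text \<open>A directed multigraph on vertex set [n] = {1..n}: arcs are the indices 0..<narcs G,
  arc e goes from atail G e to ahead G e. Parallel arcs are distinct indices; self-loops allowed.\<close>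
record mgraph =
  narcs :: nat
  atail :: "nat \<Rightarrow> nat"
  ahead :: "nat \<Rightarrow> nat"

definition regular_multigraph :: "nat \<Rightarrow> nat \<Rightarrow> mgraph \<Rightarrow> bool" where
  "regular_multigraph n r G \<longleftrightarrow>
     (\<forall>e < narcs G. atail G e \<in> {1..n} \<and> ahead G e \<in> {1..n}) \<and>
     (\<forall>v \<in> {1..n}. card {e. e < narcs G \<and> atail G e = v} = r
                 \<and> card {e. e < narcs G \<and> ahead G e = v} = r)"

definition is_path :: "mgraph \<Rightarrow> nat list \<Rightarrow> bool" where
  "is_path G P \<longleftrightarrow> P \<noteq> [] \<and> set P \<subseteq> {..<narcs G} \<and>
     (\<forall>i. Suc i < length P \<longrightarrow> ahead G (P ! i) = atail G (P ! Suc i))"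

definition path_src :: "mgraph \<Rightarrow> nat list \<Rightarrow> nat" where
  "path_src G P = atail G (hd P)"

definition path_tgt :: "mgraph \<Rightarrow> nat list \<Rightarrow> nat" where
  "path_tgt G P = ahead G (last P)"

definition hosts :: "bool \<Rightarrow> nat \<Rightarrow> mgraph \<Rightarrow> (nat \<Rightarrow> nat \<Rightarrow> real) \<Rightarrow> bool" where
  "hosts direct n G A \<longleftrightarrow>
     (\<exists>L :: (nat list \<times> real) list.
        (\<forall>(P, d) \<in> set L. is_path G P \<and> d \<ge> 0 \<and> (direct \<longrightarrow> length P = 1)) \<and>
        (\<forall>u \<in> {1..n}. \<forall>v \<in> {1..n}.
           sum_list (map snd (filter (\<lambda>(P, d). path_src G P = u \<and> path_tgt G P = v) L)) = A u v) \<and>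
        (\<forall>e < narcs G.
           sum_list (map snd (filter (\<lambda>(P, d). e \<in> set P) L)) \<le> 1 / (2 * real n - 1)))"

definition doubly_stochastic :: "nat \<Rightarrow> (nat \<Rightarrow> nat \<Rightarrow> real) \<Rightarrow> bool" where
  "doubly_stochastic n A \<longleftrightarrow>
     (\<forall>i \<in> {1..n}. \<forall>j \<in> {1..n}. A i j \<ge> 0) \<and>
     (\<forall>i \<in> {1..n}. (\<Sum>j = 1..n. A i j) = 1) \<and>
     (\<forall>j \<in> {1..n}. (\<Sum>i = 1..n. A i j) = 1)"

definition throughput_achievable :: "bool \<Rightarrow> nat \<Rightarrow> mgraph \<Rightarrow> (nat \<Rightarrow> nat \<Rightarrow> real) \<Rightarrow> real \<Rightarrow> bool" where
  "throughput_achievable direct n G A \<eta> \<longleftrightarrow>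
     (\<exists>A'. (\<forall>i \<in> {1..n}. \<forall>j \<in> {1..n}. 0 \<le> A' i j \<and> A' i j \<le> A i j) \<and>
           hosts direct n G A' \<and>
           (\<Sum>i = 1..n. \<Sum>j = 1..n. A' i j) = \<eta> * (\<Sum>i = 1..n. \<Sum>j = 1..n. A i j))"

text \<open>Weak throughput (direct = False) / weak direct throughput (direct = True):
  the largest achievable \<eta>, taken as the supremum (the maximum is attained).\<close>
definition weak_throughput :: "bool \<Rightarrow> nat \<Rightarrow> mgraph \<Rightarrow> (nat \<Rightarrow> nat \<Rightarrow> real) \<Rightarrow> real" where
  "weak_throughput direct n G A = Sup {\<eta>. throughput_achievable direct n G A \<eta>}"

end

theory Submission
  imports Defs
begin

definition Sd :: "(nat list \<times> real) list \<Rightarrow> (nat list \<Rightarrow> bool) \<Rightarrow> real" where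
  "Sd L Q = (\<Sum>k<length L. if Q (fst (L!k)) then snd (L!k) else 0)"

lemma Sd_filter: "sum_list (map snd (filter (\<lambda>(P, d). Q P) L)) = Sd L Q"
proof -
  have "sum_list (map snd (filter (\<lambda>(P, d). Q P) L)) = sum_list (map (\<lambda>x. if (case x of (P, d) \<Rightarrow> Q P) then snd x else 0) L)"
    by (rule sum_list_map_filter')
  also have "\<dots> = Sd L Q" unfolding Sd_def by (simp add: sum_list_sum_nth atLeast0LessThan case_prod_beta)
  finally show ?thesis .
qed

lemma Sd_add:
  assumes "\<And>P. Q P = (Q1 P \<or> Q2 P)" "\<And>P. \<not> (Q1 P \<and> Q2 P)"
  shows "Sd L Q = Sd L Q1 + Sd L Q2"
  unfolding Sd_def sum.distrib[symmetric]
  by (rule sum.cong) (use assms in auto)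

lemma Sd_nonneg:
  assumes "\<forall>(P, d) \<in> set L. d \<ge> 0"
  shows "Sd L Q \<ge> 0"
  unfolding Sd_def
proof (rule sum_nonneg)
  fix k assume "k \<in> {..<length L}"
  then have "L!k \<in> set L" by simp
  obtain P d where Pd: "L!k = (P, d)" by (cases "L!k")
  then show "0 \<le> (if Q (fst (L!k)) then snd (L!k) else 0)" using assms \<open>L!k \<in> set L\<close> by auto
qed

lemma Sd_cap:
  assumes nn: "\<forall>(P, d) \<in> set L. d \<ge> 0" and fin: "finite T"
    and cov: "\<And>P d. (P, d) \<in> set L \<Longrightarrow> Q P \<Longrightarrow> \<exists>e\<in>T. e \<in> set P"
    and cap: "\<And>e. e \<in> T \<Longrightarrow> Sd L (\<lambda>P. e \<in> set P) \<le> c"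
  shows "Sd L Q \<le> real (card T) * c"
proof -
  have "Sd L Q \<le> (\<Sum>k<length L. \<Sum>e\<in>T. if e \<in> set (fst (L!k)) then snd (L!k) else 0)"
    unfolding Sd_def
  proof (rule sum_mono)
    fix k assume "k \<in> {..<length L}"
    then have mem: "L!k \<in> set L" by simp
    obtain P d where Pd: "L!k = (P, d)" by (cases "L!k")
    have d0: "d \<ge> 0" using nn mem Pd by auto
    show "(if Q (fst (L!k)) then snd (L!k) else 0)
          \<le> (\<Sum>e\<in>T. if e \<in> set (fst (L!k)) then snd (L!k) else 0)"
    proof (cases "Q P")
      case True
      then obtain e where e: "e \<in> T" "e \<in> set P" using cov mem Pd by metis
      have "(if e \<in> set P then d else 0) \<le> (\<Sum>e\<in>T. if e \<in> set P then d else 0)"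
        by (rule member_le_sum) (use e fin d0 in auto)
      then show ?thesis using True e unfolding Pd fst_conv snd_conv by simp
    next
      case False
      then show ?thesis using Pd d0 by (simp add: sum_nonneg)
    qed
  qed
  also have "\<dots> = (\<Sum>e\<in>T. Sd L (\<lambda>P. e \<in> set P))"
    unfolding Sd_def by (rule sum.swap)
  also have "\<dots> \<le> (\<Sum>e\<in>T. c)" by (rule sum_mono) (use cap in auto)
  also have "\<dots> = real (card T) * c" by simp
  finally show ?thesis .
qed

lemma path_leave:
  assumes "is_path G P" "path_src G P = u" "path_tgt G P \<noteq> u"
  shows "\<exists>e\<in>set P. atail G e = u \<and> ahead G e \<noteq> u"
  using assms
proof (induction P)
  case Nil then show ?case by (simp add: is_path_def)
next
  case (Cons e P)
  show ?case
  proof (cases "ahead G e = u")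
    case False
    then show ?thesis using Cons.prems by (simp add: path_src_def)
  next
    case True
    have "P \<noteq> []" using Cons.prems True by (auto simp: path_tgt_def)
    have ip: "is_path G P" using Cons.prems(1) \<open>P \<noteq> []\<close> unfolding is_path_def
      by (auto simp del: nth_Cons_Suc simp: nth_Cons_Suc[symmetric] elim!: allE[where x="Suc _"])
    have "ahead G ((e#P)!0) = atail G ((e#P)!Suc 0)"
      using Cons.prems(1) \<open>P \<noteq> []\<close> unfolding is_path_def by (metis length_Cons length_greater_0_conv Suc_mono)
    then have "path_src G P = u" using True \<open>P \<noteq> []\<close> by (simp add: path_src_def hd_conv_nth)
    moreover have "path_tgt G P \<noteq> u" using Cons.prems(3) \<open>P \<noteq> []\<close> by (simp add: path_tgt_def)
    ultimately show ?thesis using Cons.IH ip by auto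
  qed
qed

definition Earcs :: "mgraph \<Rightarrow> nat \<Rightarrow> nat \<Rightarrow> nat set" where
  "Earcs G u v = {e. e < narcs G \<and> atail G e = u \<and> ahead G e = v}"

lemma Earcs_finite[simp]: "finite (Earcs G u v)"
  unfolding Earcs_def by simp

lemma deg_out:
  assumes "regular_multigraph n r G" "u \<in> {1..n}"
  shows "(\<Sum>v=1..n. card (Earcs G u v)) = r"
proof -
  have eq: "{e. e < narcs G \<and> atail G e = u} = (\<Union>v\<in>{1..n}. Earcs G u v)"
    using assms(1) unfolding regular_multigraph_def Earcs_def by auto
  have "card (\<Union>v\<in>{1..n}. Earcs G u v) = (\<Sum>v=1..n. card (Earcs G u v))"
    by (rule card_UN_disjoint) (auto simp: Earcs_def)
  then show ?thesis using assms eq unfolding regular_multigraph_def by metis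
qed

lemma deg_in:
  assumes "regular_multigraph n r G" "v \<in> {1..n}"
  shows "(\<Sum>u=1..n. card (Earcs G u v)) = r"
proof -
  have eq: "{e. e < narcs G \<and> ahead G e = v} = (\<Union>u\<in>{1..n}. Earcs G u v)"
    using assms(1) unfolding regular_multigraph_def Earcs_def by auto
  have "card (\<Union>u\<in>{1..n}. Earcs G u v) = (\<Sum>u=1..n. card (Earcs G u v))"
    by (rule card_UN_disjoint) (auto simp: Earcs_def)
  then show ?thesis using assms eq unfolding regular_multigraph_def by metis
qed

lemma path_arcs: "is_path G P \<Longrightarrow> e \<in> set P \<Longrightarrow> e < narcs G"
  unfolding is_path_def by auto

lemma wt_lt:
  assumes "\<And>\<eta>. throughput_achievable d n G A \<eta> \<Longrightarrow> \<eta> \<le> B"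
    and "throughput_achievable d n G A 0" and "B < \<kappa>"
  shows "\<not> weak_throughput d n G A \<ge> \<kappa>"
proof -
  have "weak_throughput d n G A \<le> B"
    unfolding weak_throughput_def by (rule cSup_least) (use assms in auto)
  then show ?thesis using assms(3) by linarith
qed

lemma zero_ach:
  assumes "n \<ge> 1" "\<forall>i \<in> {1..n}. \<forall>j \<in> {1..n}. A i j \<ge> 0"
  shows "throughput_achievable d n G A 0"
  unfolding throughput_achievable_def
proof (intro exI[of _ "\<lambda>_ _. 0"] conjI)
  show "hosts d n G (\<lambda>_ _. 0)" unfolding hosts_def
    by (rule exI[of _ "[]"]) (use assms(1) in auto)
qed (use assms(2) in auto)

definition Mn :: "nat \<Rightarrow> nat \<Rightarrow> nat \<Rightarrow> real" where
  "Mn n i j = (if i = j then (3 * real n - 1) / (2 * (2 * real n - 1)) else 1 / (2 * (2 * real n - 1)))"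

lemma sum_delta_form:
  assumes "u \<in> {1..n}"
  shows "(\<Sum>j=1..n. (if u = j then a else b)) = real n * b + (a - b)"
    and "(\<Sum>j=1..n. (if j = u then a else b)) = real n * b + (a - b)"
proof -
  have "(\<Sum>j=1..n. (if u = j then a else b)) = (\<Sum>j=1..n. b + (if u = j then a - b else 0))"
    by (rule sum.cong) auto
  also have "\<dots> = real n * b + (a - b)" using assms by (simp add: sum.distrib)
  finally show "(\<Sum>j=1..n. (if u = j then a else b)) = real n * b + (a - b)" .
  have "(\<Sum>j=1..n. (if j = u then a else b)) = (\<Sum>j=1..n. b + (if u = j then a - b else 0))"
    by (rule sum.cong) auto
  also have "\<dots> = real n * b + (a - b)" using assms by (simp add: sum.distrib)
  finally show "(\<Sum>j=1..n. (if j = u then a else b)) = real n * b + (a - b)" .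
qed

lemma frac_comb: "(x::real) * (1 / D) + (a / D - 1 / D) = (x + a - 1) / D"
  by (simp add: add_divide_distrib diff_divide_distrib)

lemma Mn_row: assumes "n \<ge> 1" "i \<in> {1..n}" shows "(\<Sum>j=1..n. Mn n i j) = 1"
proof -
  have r: "2 * real n - 1 > 0" using assms by simp
  have "(\<Sum>j=1..n. Mn n i j) = real n * (1 / (2 * (2 * real n - 1))) + ((3 * real n - 1) / (2 * (2 * real n - 1)) - 1 / (2 * (2 * real n - 1)))"
    unfolding Mn_def by (rule sum_delta_form(1)[OF assms(2)])
  also have "\<dots> = (real n + (3 * real n - 1) - 1) / (2 * (2 * real n - 1))"
    by (rule frac_comb)
  also have "\<dots> = 1" using r by (subst divide_eq_1_iff) auto
  finally show ?thesis .
qed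

lemma Mn_col: assumes "n \<ge> 1" "j \<in> {1..n}" shows "(\<Sum>i=1..n. Mn n i j) = 1"
proof -
  have r: "2 * real n - 1 > 0" using assms by simp
  have "(\<Sum>i=1..n. Mn n i j) = real n * (1 / (2 * (2 * real n - 1))) + ((3 * real n - 1) / (2 * (2 * real n - 1)) - 1 / (2 * (2 * real n - 1)))"
    unfolding Mn_def by (rule sum_delta_form(2)[OF assms(2)])
  also have "\<dots> = (real n + (3 * real n - 1) - 1) / (2 * (2 * real n - 1))"
    by (rule frac_comb)
  also have "\<dots> = 1" using r by (subst divide_eq_1_iff) auto
  finally show ?thesis .
qed

lemma Mn_ds: "n \<ge> 1 \<Longrightarrow> doubly_stochastic n (Mn n)"
  unfolding doubly_stochastic_def using Mn_row Mn_col by (auto simp: Mn_def)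

lemma half_bound:
  fixes x :: real and k m :: nat
  assumes "x \<le> real k + 1/2" "x \<le> real m"
  shows "x \<le> (real m + real k + 1/2) / 2 - 1/4"
proof (cases "m \<ge> k + 1")
  case True
  then have "real m \<ge> real k + 1" by linarith
  then have "2 * x \<le> real m + real k" using assms by linarith
  then show ?thesis by (simp add: field_simps)
next
  case False
  then have "real m \<le> real k" by linarith
  then have "2 * x \<le> real m + real k" using assms by linarith
  then show ?thesis by (simp add: field_simps)
qed

lemma host_entry:
  assumes "hosts dir n G A'"
  obtains L where "\<forall>(P, d) \<in> set L. is_path G P \<and> d \<ge> 0 \<and> (dir \<longrightarrow> length P = 1)"
    "\<And>u v. u \<in> {1..n} \<Longrightarrow> v \<in> {1..n} \<Longrightarrow> A' u v = Sd L (\<lambda>P. path_src G P = u \<and> path_tgt G P = v)"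
    "\<And>e. e < narcs G \<Longrightarrow> Sd L (\<lambda>P. e \<in> set P) \<le> 1 / (2 * real n - 1)"
proof -
  from assms obtain L where L:
    "\<forall>(P, dd) \<in> set L. is_path G P \<and> dd \<ge> 0 \<and> (dir \<longrightarrow> length P = 1)"
    "\<forall>u \<in> {1..n}. \<forall>v \<in> {1..n}.
           sum_list (map snd (filter (\<lambda>(P, d). path_src G P = u \<and> path_tgt G P = v) L)) = A' u v"
    "\<forall>e < narcs G. sum_list (map snd (filter (\<lambda>(P, d). e \<in> set P) L)) \<le> 1 / (2 * real n - 1)"
    unfolding hosts_def by blast
  show ?thesis
  proof (rule that)
    show "\<forall>(P, dd) \<in> set L. is_path G P \<and> dd \<ge> 0 \<and> (dir \<longrightarrow> length P = 1)" by fact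
    fix u v assume "u \<in> {1..n}" "v \<in> {1..n}"
    then have "sum_list (map snd (filter (\<lambda>(P, d). path_src G P = u \<and> path_tgt G P = v) L)) = A' u v"
      using L(2) by blast
    then show "A' u v = Sd L (\<lambda>P. path_src G P = u \<and> path_tgt G P = v)"
      unfolding Sd_filter by simp
  next
    fix e assume "e < narcs G"
    then have "sum_list (map snd (filter (\<lambda>(P, d). e \<in> set P) L)) \<le> 1 / (2 * real n - 1)"
      using L(3) by blast
    then show "Sd L (\<lambda>P. e \<in> set P) \<le> 1 / (2 * real n - 1)"
      unfolding Sd_filter .
  qed
qed

lemma rdiv: "(r::real) \<noteq> 0 \<Longrightarrow> r * (a / (2 * r)) = a / 2"
  by (simp add: field_simps)

lemma part2_sum:
  assumes n1: "n \<ge> 1" and reg: "regular_multigraph n (2 * n - 1) G" and h: "hosts True n G A'"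
    and bnd: "\<forall>i \<in> {1..n}. \<forall>j \<in> {1..n}. 0 \<le> A' i j \<and> A' i j \<le> Mn n i j"
  shows "(2 * real n - 1) * (\<Sum>i=1..n. \<Sum>j=1..n. A' i j)
           \<le> real n * ((2 * real n - 1) - (if even n then real n else real n - 1) / 4)"
proof -
  define r where "r = 2 * real n - 1"
  have r0: "r \<ge> 1" using n1 unfolding r_def by simp
  have rnat: "real (2 * n - 1) = r" using n1 unfolding r_def by (simp add: of_nat_diff)
  obtain L where L1: "\<forall>(P, d) \<in> set L. is_path G P \<and> d \<ge> 0 \<and> (True \<longrightarrow> length P = 1)"
    and L2: "\<And>u v. u \<in> {1..n} \<Longrightarrow> v \<in> {1..n} \<Longrightarrow> A' u v = Sd L (\<lambda>P. path_src G P = u \<and> path_tgt G P = v)"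
    and L3: "\<And>e. e < narcs G \<Longrightarrow> Sd L (\<lambda>P. e \<in> set P) \<le> 1 / (2 * real n - 1)"
    using host_entry[OF h] by blast
  have nn: "\<forall>(P, d) \<in> set L. d \<ge> 0" using L1 by auto
  have Ale: "A' u v \<le> real (card (Earcs G u v)) * (1 / r)" if uv: "u \<in> {1..n}" "v \<in> {1..n}" for u v
  proof -
    have "Sd L (\<lambda>P. path_src G P = u \<and> path_tgt G P = v) \<le> real (card (Earcs G u v)) * (1 / r)"
    proof (rule Sd_cap[OF nn Earcs_finite])
      fix P d assume Pd: "(P, d) \<in> set L" and Q: "path_src G P = u \<and> path_tgt G P = v"
      then have ip: "is_path G P" and l1: "length P = 1" using L1 by auto
      then obtain e where Pe: "P = [e]" by (cases P) auto
      have "e < narcs G" using path_arcs[OF ip] Pe by simp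
      then have "e \<in> Earcs G u v" using Q Pe by (simp add: Earcs_def path_src_def path_tgt_def)
      then show "\<exists>e\<in>Earcs G u v. e \<in> set P" using Pe by auto
    next
      fix e assume "e \<in> Earcs G u v"
      then show "Sd L (\<lambda>P. e \<in> set P) \<le> 1 / r" using L3 unfolding r_def by (simp add: Earcs_def)
    qed
    then show ?thesis using L2[OF uv] by simp
  qed
  define c :: real where "c = (if even n then 0 else 1)"
  have row: "r * (\<Sum>j=1..n. A' u j) \<le> r - (real n - c) / 4" if u: "u \<in> {1..n}" for u
  proof -
    define g :: "nat \<Rightarrow> real" where "g v = 1 - (if v = u then c else 0)" for v
    have ent: "r * A' u v \<le> (real (card (Earcs G u v)) + r * Mn n u v) / 2 - g v / 4"
      if v: "v \<in> {1..n}" for v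
    proof -
      define m where "m = card (Earcs G u v)"
      have x1: "r * A' u v \<le> real m" using mult_left_mono[OF Ale[OF u v], of r] r0 unfolding m_def by simp
      have x2: "r * A' u v \<le> r * Mn n u v" using bnd u v r0 by (simp add: mult_left_mono)
      show ?thesis
      proof (cases "v = u")
        case False
        have rM: "r * Mn n u v = 1/2" using False r0 unfolding Mn_def r_def by simp
        then have "r * A' u v \<le> (real m + real 0 + 1/2) / 2 - 1/4"
          using half_bound[of "r * A' u v" 0 m] x1 x2 by simp
        then show ?thesis unfolding rM g_def m_def using False by simp
      next
        case True
        show ?thesis
        proof (cases "even n")
          case True
          then obtain t where t: "n = 2 * t" by blast
          with n1 have t1: "t \<ge> 1" by simp
          have rM0: "r * Mn n u u = (3 * real n - 1) / 2"
            using r0 rdiv[of r "3 * real n - 1"] unfolding Mn_def r_def by simp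
          have "real (3 * t - 1) = 3 * real t - 1" using t1 by (simp add: of_nat_diff)
          then have rM: "r * Mn n u u = real (3 * t - 1) + 1/2"
            using rM0 t by simp
          then have "r * A' u v \<le> (real m + real (3 * t - 1) + 1/2) / 2 - 1/4"
            using half_bound[of "r * A' u v" "3 * t - 1" m] x1 x2 \<open>v = u\<close> by simp
          then show ?thesis using True \<open>v = u\<close> rM unfolding g_def m_def c_def by (simp add: add.assoc)
        next
          case False
          then show ?thesis using x1 x2 \<open>v = u\<close> unfolding g_def m_def c_def by simp
        qed
      qed
    qed
    have "r * (\<Sum>j=1..n. A' u j) = (\<Sum>j=1..n. r * A' u j)" by (simp add: sum_distrib_left)
    also have "\<dots> \<le> (\<Sum>j=1..n. (real (card (Earcs G u j)) + r * Mn n u j) / 2 - g j / 4)"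
      by (rule sum_mono) (rule ent, simp)
    also have "\<dots> = (\<Sum>j=1..n. (real (card (Earcs G u j)) + r * Mn n u j)) / 2 - (\<Sum>j=1..n. g j) / 4"
      by (simp only: sum_subtractf sum_divide_distrib)
    also have "(\<Sum>j=1..n. (real (card (Earcs G u j)) + r * Mn n u j)) = real (\<Sum>j=1..n. card (Earcs G u j)) + r * (\<Sum>j=1..n. Mn n u j)"
      by (simp only: sum.distrib sum_distrib_left of_nat_sum)
    also have "(\<Sum>j=1..n. g j) = real n - c"
      using u unfolding g_def by (simp add: sum_subtractf)
    also have "(\<Sum>j=1..n. card (Earcs G u j)) = 2 * n - 1" by (rule deg_out[OF reg u])
    also have "(\<Sum>j=1..n. Mn n u j) = 1" by (rule Mn_row[OF n1 u])
    finally show ?thesis using rnat by simp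
  qed
  have "r * (\<Sum>i=1..n. \<Sum>j=1..n. A' i j) = (\<Sum>i=1..n. r * (\<Sum>j=1..n. A' i j))"
    by (simp add: sum_distrib_left)
  also have "\<dots> \<le> (\<Sum>i=1..n. r - (real n - c) / 4)"
    by (rule sum_mono) (rule row, simp)
  also have "\<dots> = real n * (r - (real n - c) / 4)" by simp
  finally have fin: "r * (\<Sum>i=1..n. \<Sum>j=1..n. A' i j) \<le> real n * (r - (real n - c) / 4)" .
  show ?thesis
  proof (cases "even n")
    case True then show ?thesis using fin unfolding r_def c_def by simp
  next
    case False then show ?thesis using fin unfolding r_def c_def by simp
  qed
qed

lemma sum12: "(\<Sum>v=(1::nat)..2. f v) = f 1 + (f 2 :: 'a::comm_monoid_add)"
  by (simp add: numeral_2_eq_2)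

definition N1 :: "nat \<Rightarrow> nat \<Rightarrow> real" where
  "N1 i j = (if i = j then 5/9 else 4/9)"

lemma ends12:
  assumes reg: "regular_multigraph 2 3 G" and ip: "is_path G P" and e: "e \<in> set P"
  shows "(atail G e = 1 \<or> atail G e = 2) \<and> (ahead G e = 1 \<or> ahead G e = 2)"
proof -
  have "e < narcs G" using path_arcs[OF ip e] .
  then have "atail G e \<in> {1..2} \<and> ahead G e \<in> {1..2}" using reg unfolding regular_multigraph_def by blast
  then show ?thesis by auto
qed

lemma lp:
  fixes y11 y12 y21 y22 p1 p2 q1 q2 a :: real
  assumes "a = 0 \<or> a = 1 \<or> a = 2 \<or> a = 3"
    and "y11 = p1 + q1" "p1 \<le> a * (1/3)"
    and "y22 = p2 + q2" "p2 \<le> a * (1/3)"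
    and "y12 + q1 + q2 \<le> (3 - a) * (1/3)" "y21 + q1 + q2 \<le> (3 - a) * (1/3)"
    and "q1 \<ge> 0" "q2 \<ge> 0" "y11 \<le> 5/9" "y22 \<le> 5/9" "y12 \<le> 4/9" "y21 \<le> 4/9"
  shows "y11 + y12 + y21 + y22 \<le> 16/9"
  using assms(1)
proof (elim disjE)
  assume h: "a = 0" show ?thesis using assms(2-) unfolding h by (simp add: field_simps; linarith)
next
  assume h: "a = 1" show ?thesis using assms(2-) unfolding h by (simp add: field_simps; linarith)
next
  assume h: "a = 2" show ?thesis using assms(2-) unfolding h by (simp add: field_simps; linarith)
next
  assume h: "a = 3" show ?thesis using assms(2-) unfolding h by (simp add: field_simps; linarith)
qed

lemma part1_sum:
  assumes reg: "regular_multigraph 2 3 G" and h: "hosts False 2 G A'"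
    and bnd: "\<forall>i \<in> {1..2}. \<forall>j \<in> {1..2}. 0 \<le> A' i j \<and> A' i j \<le> N1 i j"
  shows "A' 1 1 + A' 1 2 + A' 2 1 + A' 2 2 \<le> 16/9"
proof -
  obtain L where L1: "\<forall>(P, d) \<in> set L. is_path G P \<and> d \<ge> 0 \<and> (False \<longrightarrow> length P = 1)"
    and L2: "\<And>u v. u \<in> {1..2} \<Longrightarrow> v \<in> {1..2} \<Longrightarrow> A' u v = Sd L (\<lambda>P. path_src G P = u \<and> path_tgt G P = v)"
    and L3: "\<And>e. e < narcs G \<Longrightarrow> Sd L (\<lambda>P. e \<in> set P) \<le> 1 / (2 * real 2 - 1)"
    using host_entry[OF h] by blast
  have nn: "\<forall>(P, d) \<in> set L. d \<ge> 0" using L1 by auto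
  have ipL: "is_path G P" if "(P, d) \<in> set L" for P d using L1 that by auto
  have cap: "Sd L (\<lambda>P. e \<in> set P) \<le> 1 / 3" if "e \<in> Earcs G u v" for e u v
    using L3[of e] that by (simp add: Earcs_def)
  define U1 where "U1 P = (\<exists>e\<in>set P. e \<in> Earcs G 1 1)" for P
  define U2 where "U2 P = (\<exists>e\<in>set P. e \<in> Earcs G 2 2)" for P
  define s where "s = path_src G"
  define t where "t = path_tgt G"
  have y11: "A' 1 1 = Sd L (\<lambda>P. s P = 1 \<and> t P = 1)" using L2[of 1 1] unfolding s_def t_def by simp
  have y12: "A' 1 2 = Sd L (\<lambda>P. s P = 1 \<and> t P = 2)" using L2[of 1 2] unfolding s_def t_def by simp
  have y21: "A' 2 1 = Sd L (\<lambda>P. s P = 2 \<and> t P = 1)" using L2[of 2 1] unfolding s_def t_def by simp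
  have y22: "A' 2 2 = Sd L (\<lambda>P. s P = 2 \<and> t P = 2)" using L2[of 2 2] unfolding s_def t_def by simp
  have sp1: "Sd L (\<lambda>P. s P = 1 \<and> t P = 1) = Sd L (\<lambda>P. (s P = 1 \<and> t P = 1) \<and> U1 P) + Sd L (\<lambda>P. (s P = 1 \<and> t P = 1) \<and> \<not> U1 P)"
    by (rule Sd_add) auto
  have sp2: "Sd L (\<lambda>P. s P = 2 \<and> t P = 2) = Sd L (\<lambda>P. (s P = 2 \<and> t P = 2) \<and> U2 P) + Sd L (\<lambda>P. (s P = 2 \<and> t P = 2) \<and> \<not> U2 P)"
    by (rule Sd_add) auto
  have p1: "Sd L (\<lambda>P. (s P = 1 \<and> t P = 1) \<and> U1 P) \<le> real (card (Earcs G 1 1)) * (1/3)"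
    by (rule Sd_cap[OF nn Earcs_finite _ cap]) (auto simp: U1_def)
  have p2: "Sd L (\<lambda>P. (s P = 2 \<and> t P = 2) \<and> U2 P) \<le> real (card (Earcs G 2 2)) * (1/3)"
    by (rule Sd_cap[OF nn Earcs_finite _ cap]) (auto simp: U2_def)
  have sp12: "Sd L (\<lambda>P. (s P = 1 \<and> t P = 2) \<or> ((s P = 1 \<and> t P = 1) \<and> \<not> U1 P) \<or> ((s P = 2 \<and> t P = 2) \<and> \<not> U2 P))
     = Sd L (\<lambda>P. s P = 1 \<and> t P = 2) + Sd L (\<lambda>P. (s P = 1 \<and> t P = 1) \<and> \<not> U1 P) + Sd L (\<lambda>P. (s P = 2 \<and> t P = 2) \<and> \<not> U2 P)"
  proof -
    have "Sd L (\<lambda>P. (s P = 1 \<and> t P = 2) \<or> ((s P = 1 \<and> t P = 1) \<and> \<not> U1 P) \<or> ((s P = 2 \<and> t P = 2) \<and> \<not> U2 P))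
      = Sd L (\<lambda>P. s P = 1 \<and> t P = 2) + Sd L (\<lambda>P. ((s P = 1 \<and> t P = 1) \<and> \<not> U1 P) \<or> ((s P = 2 \<and> t P = 2) \<and> \<not> U2 P))"
      by (rule Sd_add) auto
    also have "Sd L (\<lambda>P. ((s P = 1 \<and> t P = 1) \<and> \<not> U1 P) \<or> ((s P = 2 \<and> t P = 2) \<and> \<not> U2 P))
      = Sd L (\<lambda>P. (s P = 1 \<and> t P = 1) \<and> \<not> U1 P) + Sd L (\<lambda>P. (s P = 2 \<and> t P = 2) \<and> \<not> U2 P)"
      by (rule Sd_add) auto
    finally show ?thesis by simp
  qed
  have sp21: "Sd L (\<lambda>P. (s P = 2 \<and> t P = 1) \<or> ((s P = 1 \<and> t P = 1) \<and> \<not> U1 P) \<or> ((s P = 2 \<and> t P = 2) \<and> \<not> U2 P))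
     = Sd L (\<lambda>P. s P = 2 \<and> t P = 1) + Sd L (\<lambda>P. (s P = 1 \<and> t P = 1) \<and> \<not> U1 P) + Sd L (\<lambda>P. (s P = 2 \<and> t P = 2) \<and> \<not> U2 P)"
  proof -
    have "Sd L (\<lambda>P. (s P = 2 \<and> t P = 1) \<or> ((s P = 1 \<and> t P = 1) \<and> \<not> U1 P) \<or> ((s P = 2 \<and> t P = 2) \<and> \<not> U2 P))
      = Sd L (\<lambda>P. s P = 2 \<and> t P = 1) + Sd L (\<lambda>P. ((s P = 1 \<and> t P = 1) \<and> \<not> U1 P) \<or> ((s P = 2 \<and> t P = 2) \<and> \<not> U2 P))"
      by (rule Sd_add) auto
    also have "Sd L (\<lambda>P. ((s P = 1 \<and> t P = 1) \<and> \<not> U1 P) \<or> ((s P = 2 \<and> t P = 2) \<and> \<not> U2 P))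
      = Sd L (\<lambda>P. (s P = 1 \<and> t P = 1) \<and> \<not> U1 P) + Sd L (\<lambda>P. (s P = 2 \<and> t P = 2) \<and> \<not> U2 P)"
      by (rule Sd_add) auto
    finally show ?thesis by simp
  qed
  have first: "hd P \<in> set P \<and> atail G (hd P) = s P" and lst: "last P \<in> set P \<and> ahead G (last P) = t P"
    if "(P, d) \<in> set L" for P d
    using ipL[OF that] unfolding is_path_def s_def t_def path_src_def path_tgt_def by auto
  have c12: "Sd L (\<lambda>P. (s P = 1 \<and> t P = 2) \<or> ((s P = 1 \<and> t P = 1) \<and> \<not> U1 P) \<or> ((s P = 2 \<and> t P = 2) \<and> \<not> U2 P))
     \<le> real (card (Earcs G 1 2)) * (1/3)"
  proof (rule Sd_cap[OF nn Earcs_finite])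
    fix P d assume Pd: "(P, d) \<in> set L"
      and Q: "(s P = 1 \<and> t P = 2) \<or> ((s P = 1 \<and> t P = 1) \<and> \<not> U1 P) \<or> ((s P = 2 \<and> t P = 2) \<and> \<not> U2 P)"
    have ip: "is_path G P" using ipL[OF Pd] .
    have ends: "\<And>e. e \<in> set P \<Longrightarrow> (atail G e = 1 \<or> atail G e = 2) \<and> (ahead G e = 1 \<or> ahead G e = 2)"
      using ends12[OF reg ip] by blast
    have inE: "\<And>e. e \<in> set P \<Longrightarrow> atail G e = u \<Longrightarrow> ahead G e = v \<Longrightarrow> e \<in> Earcs G u v" for u v
      using path_arcs[OF ip] by (auto simp: Earcs_def)
    show "\<exists>e\<in>Earcs G 1 2. e \<in> set P"
    proof (cases "s P = 1 \<and> t P = 2")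
      case True
      then obtain e where "e \<in> set P" "atail G e = 1" "ahead G e \<noteq> 1"
        using path_leave[OF ip, of 1] unfolding s_def t_def by auto
      then show ?thesis using ends inE by metis
    next
      case False
      then have "((s P = 1 \<and> t P = 1) \<and> \<not> U1 P) \<or> ((s P = 2 \<and> t P = 2) \<and> \<not> U2 P)" using Q by blast
      then show ?thesis
      proof
        assume a: "(s P = 1 \<and> t P = 1) \<and> \<not> U1 P"
        then show ?thesis using first[OF Pd] ends[of "hd P"] inE[of "hd P"] unfolding U1_def by metis
      next
        assume a: "(s P = 2 \<and> t P = 2) \<and> \<not> U2 P"
        then show ?thesis using lst[OF Pd] ends[of "last P"] inE[of "last P"] unfolding U2_def by metis
      qed
    qed
  qed (rule cap)
  have c21: "Sd L (\<lambda>P. (s P = 2 \<and> t P = 1) \<or> ((s P = 1 \<and> t P = 1) \<and> \<not> U1 P) \<or> ((s P = 2 \<and> t P = 2) \<and> \<not> U2 P))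
     \<le> real (card (Earcs G 2 1)) * (1/3)"
  proof (rule Sd_cap[OF nn Earcs_finite])
    fix P d assume Pd: "(P, d) \<in> set L"
      and Q: "(s P = 2 \<and> t P = 1) \<or> ((s P = 1 \<and> t P = 1) \<and> \<not> U1 P) \<or> ((s P = 2 \<and> t P = 2) \<and> \<not> U2 P)"
    have ip: "is_path G P" using ipL[OF Pd] .
    have ends: "\<And>e. e \<in> set P \<Longrightarrow> (atail G e = 1 \<or> atail G e = 2) \<and> (ahead G e = 1 \<or> ahead G e = 2)"
      using ends12[OF reg ip] by blast
    have inE: "\<And>e. e \<in> set P \<Longrightarrow> atail G e = u \<Longrightarrow> ahead G e = v \<Longrightarrow> e \<in> Earcs G u v" for u v
      using path_arcs[OF ip] by (auto simp: Earcs_def)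
    show "\<exists>e\<in>Earcs G 2 1. e \<in> set P"
    proof (cases "s P = 2 \<and> t P = 1")
      case True
      then obtain e where "e \<in> set P" "atail G e = 2" "ahead G e \<noteq> 2"
        using path_leave[OF ip, of 2] unfolding s_def t_def by auto
      then show ?thesis using ends inE by metis
    next
      case False
      then have "((s P = 1 \<and> t P = 1) \<and> \<not> U1 P) \<or> ((s P = 2 \<and> t P = 2) \<and> \<not> U2 P)" using Q by blast
      then show ?thesis
      proof
        assume a: "(s P = 1 \<and> t P = 1) \<and> \<not> U1 P"
        then show ?thesis using lst[OF Pd] ends[of "last P"] inE[of "last P"] unfolding U1_def by metis
      next
        assume a: "(s P = 2 \<and> t P = 2) \<and> \<not> U2 P"
        then show ?thesis using first[OF Pd] ends[of "hd P"] inE[of "hd P"] unfolding U2_def by metis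
      qed
    qed
  qed (rule cap)
  have q1: "Sd L (\<lambda>P. (s P = 1 \<and> t P = 1) \<and> \<not> U1 P) \<ge> 0" by (rule Sd_nonneg[OF nn])
  have q2: "Sd L (\<lambda>P. (s P = 2 \<and> t P = 2) \<and> \<not> U2 P) \<ge> 0" by (rule Sd_nonneg[OF nn])
  have o1: "card (Earcs G 1 1) + card (Earcs G 1 2) = 3" using deg_out[OF reg, of 1] unfolding sum12 by simp
  have o2: "card (Earcs G 2 1) + card (Earcs G 2 2) = 3" using deg_out[OF reg, of 2] unfolding sum12 by simp
  have i1: "card (Earcs G 1 1) + card (Earcs G 2 1) = 3" using deg_in[OF reg, of 1] unfolding sum12 by simp
  have bb: "0 \<le> A' i j \<and> A' i j \<le> N1 i j" if "i \<in> {1..2}" "j \<in> {1..2}" for i j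
    using bnd that by blast
  have b: "A' 1 1 \<le> 5/9" "A' 2 2 \<le> 5/9" "A' 1 2 \<le> 4/9" "A' 2 1 \<le> 4/9" "A' 1 2 \<ge> 0" "A' 2 1 \<ge> 0"
    using bb[of 1 1] bb[of 2 2] bb[of 1 2] bb[of 2 1] unfolding N1_def by simp_all
  have "card (Earcs G 1 1) \<le> 3" using o1 by linarith
  then have "card (Earcs G 1 1) = 0 \<or> card (Earcs G 1 1) = 1 \<or> card (Earcs G 1 1) = 2 \<or> card (Earcs G 1 1) = 3" by presburger
  moreover have "real (card (Earcs G 1 2)) = 3 - real (card (Earcs G 1 1))" using o1 by linarith
  moreover have "real (card (Earcs G 2 1)) = 3 - real (card (Earcs G 1 1))" using i1 by linarith
  moreover have "real (card (Earcs G 2 2)) = real (card (Earcs G 1 1))" using o2 i1 by linarith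
  ultimately have ca: "a = 0 \<or> a = 1 \<or> a = 2 \<or> a = 3" and e12: "real (card (Earcs G 1 2)) = 3 - a"
    and e21: "real (card (Earcs G 2 1)) = 3 - a" and e22: "real (card (Earcs G 2 2)) = a"
    if "a = real (card (Earcs G 1 1))" for a
    using that by auto
  note A = ca[OF refl] e12[OF refl] e21[OF refl] e22[OF refl]
  show ?thesis
    apply (rule lp[OF A(1), of "A' 1 1" "Sd L (\<lambda>P. (s P = 1 \<and> t P = 1) \<and> U1 P)" "Sd L (\<lambda>P. (s P = 1 \<and> t P = 1) \<and> \<not> U1 P)"
       "A' 2 2" "Sd L (\<lambda>P. (s P = 2 \<and> t P = 2) \<and> U2 P)" "Sd L (\<lambda>P. (s P = 2 \<and> t P = 2) \<and> \<not> U2 P)" "A' 1 2" "A' 2 1"])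
    using y11 y12 y21 y22 sp1 sp2 p1 p2 sp12 sp21 c12 c21 q1 q2 b A by simp_all
qed

lemma N1_ds: "doubly_stochastic 2 N1"
  unfolding doubly_stochastic_def
proof (intro conjI ballI)
  fix i j :: nat assume "i \<in> {1..2}" "j \<in> {1..2}"
  then show "0 \<le> N1 i j" by (simp add: N1_def)
next
  fix i :: nat assume "i \<in> {1..2}"
  then have "i = 1 \<or> i = 2" by auto
  then show "(\<Sum>j=1..2. N1 i j) = 1" unfolding sum12 by (auto simp: N1_def)
next
  fix j :: nat assume "j \<in> {1..2}"
  then have "j = 1 \<or> j = 2" by auto
  then show "(\<Sum>i=1..2. N1 i j) = 1" unfolding sum12 by (auto simp: N1_def)
qed

lemma part1:
  assumes "\<kappa> > 8/9" "regular_multigraph 2 3 G"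
  shows "\<not> weak_throughput False 2 G N1 \<ge> \<kappa>"
proof (rule wt_lt[where B = "8/9"])
  fix \<eta> assume "throughput_achievable False 2 G N1 \<eta>"
  then obtain A' where b: "\<forall>i \<in> {1..2}. \<forall>j \<in> {1..2}. 0 \<le> A' i j \<and> A' i j \<le> N1 i j"
    and h: "hosts False 2 G A'"
    and s: "(\<Sum>i = 1..2. \<Sum>j = 1..2. A' i j) = \<eta> * (\<Sum>i = 1..2. \<Sum>j = 1..2. N1 i j)"
    unfolding throughput_achievable_def by blast
  have "A' 1 1 + A' 1 2 + A' 2 1 + A' 2 2 \<le> 16/9" by (rule part1_sum[OF assms(2) h b])
  moreover have "A' 1 1 + A' 1 2 + A' 2 1 + A' 2 2 = \<eta> * 2" using s unfolding sum12 by (simp add: N1_def)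
  ultimately show "\<eta> \<le> 8/9" by linarith
next
  show "throughput_achievable False 2 G N1 0" by (rule zero_ach) (auto simp: N1_def)
qed (use assms in simp)

lemma part2:
  fixes n :: nat
  assumes n1: "n \<ge> 1"
    and k: "\<kappa> > (if even n then (7 * real n - 4) / (8 * real n - 4) else (7 * real n - 3) / (8 * real n - 4))"
    and reg: "regular_multigraph n (2 * n - 1) G"
  shows "\<not> weak_throughput True n G (Mn n) \<ge> \<kappa>"
proof (rule wt_lt[where B = "(if even n then (7 * real n - 4) / (8 * real n - 4) else (7 * real n - 3) / (8 * real n - 4))"])
  fix \<eta> assume "throughput_achievable True n G (Mn n) \<eta>"
  then obtain A' where b: "\<forall>i \<in> {1..n}. \<forall>j \<in> {1..n}. 0 \<le> A' i j \<and> A' i j \<le> Mn n i j"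
    and h: "hosts True n G A'"
    and s: "(\<Sum>i = 1..n. \<Sum>j = 1..n. A' i j) = \<eta> * (\<Sum>i = 1..n. \<Sum>j = 1..n. Mn n i j)"
    unfolding throughput_achievable_def by blast
  have "(\<Sum>i = 1..n. \<Sum>j = 1..n. Mn n i j) = (\<Sum>i = 1..n. 1)"
    by (rule sum.cong) (use Mn_row[OF n1] in auto)
  then have s2: "(\<Sum>i = 1..n. \<Sum>j = 1..n. A' i j) = \<eta> * real n" using s by simp
  have main: "(2 * real n - 1) * (\<eta> * real n)
           \<le> real n * ((2 * real n - 1) - (if even n then real n else real n - 1) / 4)"
    using part2_sum[OF n1 reg h b] unfolding s2 .
  have np: "real n > 0" using n1 by simp
  have main2: "(2 * real n - 1) * \<eta> \<le> (2 * real n - 1) - (if even n then real n else real n - 1) / 4"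
  proof -
    have eq: "(2 * real n - 1) * (\<eta> * real n) = real n * ((2 * real n - 1) * \<eta>)" by (simp add: algebra_simps)
    show ?thesis using main np unfolding eq by (simp only: mult_le_cancel_left_pos)
  qed
  have dp: "8 * real n - 4 > 0" using n1 by simp
  show "\<eta> \<le> (if even n then (7 * real n - 4) / (8 * real n - 4) else (7 * real n - 3) / (8 * real n - 4))"
  proof (cases "even n")
    case True
    have "\<eta> * (8 * real n - 4) \<le> 7 * real n - 4" using main2 True by (simp add: algebra_simps)
    then show ?thesis using True dp by (simp add: pos_le_divide_eq)
  next
    case False
    have e4: "\<eta> * (8 * real n - 4) = 4 * ((2 * real n - 1) * \<eta>)" by (simp add: algebra_simps)
    have "(2 * real n - 1) * \<eta> \<le> (2 * real n - 1) - (real n - 1) / 4" using main2 False by simp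
    then have "\<eta> * (8 * real n - 4) \<le> 7 * real n - 3" unfolding e4 by (simp add: field_simps; linarith)
    then show ?thesis using False dp by (simp add: pos_le_divide_eq)
  qed
next
  show "throughput_achievable True n G (Mn n) 0" by (rule zero_ach[OF n1]) (auto simp: Mn_def)
qed (use k in simp)

theorem proposition4p4:
  shows "(\<exists>N. doubly_stochastic 2 N \<and>
            (\<forall>\<kappa>::real. \<kappa> > 8 / 9 \<longrightarrow>
               (\<forall>G. regular_multigraph 2 3 G \<longrightarrow> \<not> weak_throughput False 2 G N \<ge> \<kappa>)))
       \<and> (\<forall>n::nat. n \<ge> 1 \<longrightarrow>
            (\<exists>M. doubly_stochastic n M \<and>
               (\<forall>\<kappa>::real.
                  \<kappa> > (if even n then (7 * real n - 4) / (8 * real n - 4)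
                               else (7 * real n - 3) / (8 * real n - 4)) \<longrightarrow>
                  (\<forall>G. regular_multigraph n (2 * n - 1) G \<longrightarrow>
                        \<not> weak_throughput True n G M \<ge> \<kappa>))))"
proof (intro conjI allI impI)
  show "\<exists>N. doubly_stochastic 2 N \<and>
            (\<forall>\<kappa>::real. \<kappa> > 8 / 9 \<longrightarrow>
               (\<forall>G. regular_multigraph 2 3 G \<longrightarrow> \<not> weak_throughput False 2 G N \<ge> \<kappa>))"
    using N1_ds part1 by blast
next
  fix n :: nat assume n1: "n \<ge> 1"
  show "\<exists>M. doubly_stochastic n M \<and>
               (\<forall>\<kappa>::real.
                  \<kappa> > (if even n then (7 * real n - 4) / (8 * real n - 4)
                               else (7 * real n - 3) / (8 * real n - 4)) \<longrightarrow>
                  (\<forall>G. regular_multigraph n (2 * n - 1) G \<longrightarrow>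
                        \<not> weak_throughput True n G M \<ge> \<kappa>))"
    using Mn_ds[OF n1] part2[OF n1] by blast
qed

end
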